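(* Consider a Boolean control network $\mathbf{x}(t+1)=L\ltimes\mathbf{u}(t)\ltimes\mathbf{x}(t)$, $\mathbf{y}(t)=H\mathbf{x}(t)$, with $L\in\mathcal{L}_{N\times NM}$, $H\in\mathcal{L}_{P\times N}$, a periodic reference output trajectory of minimal period $T\ge1$, $\mathbf{y}_r(s+kT)=\delta_P^{i_s}$ ($s\in[1,T]$, $k\in\mathbb{Z}_+$), and an initial state $\mathbf{x}_0\in\mathcal{L}_N$. Let $\mathbf{v}(t)=H^\top\mathbf{y}_r(t)$ for $t\in[1,T+1]$ (so $\mathbf{v}(T+1)=\mathbf{v}(1)$), $L_{tot}=L_1\vee\cdots\vee L_M$, and $\boldsymbol{\alpha}(1)=\mathbf{v}(1)$, $\boldsymbol{\alpha}(t)=\mathbf{v}(t)\odot(L_{tot}\boldsymbol{\alpha}(t-1))$ for $t\in[2,T+1]$. Define $\boldsymbol{\beta}_1(T+1)=\boldsymbol{\alpha}(T+1)$, $\boldsymbol{\beta}_1(t)=\boldsymbol{\alpha}(t)\odot(L_{tot}^\top\boldsymbol{\beta}_1(t+1))$ for $t=T,\dots,1$, and for $k\ge2$: $\boldsymbol{\beta}_k(T+1)=\boldsymbol{\beta}_{k-1}(T+1)\odot\boldsymbol{\beta}_{k-1}(1)$, $\boldsymbol{\beta}_k(t)=\boldsymbol{\beta}_{k-1}(t)\odot(L_{tot}^\top\boldsymbol{\beta}_k(t+1))$ for $t=T,\dots,1$. Let $\mathcal{X}_t^{(k)}=\{\delta_N^j:[\boldsymbol{\beta}_k(t)]_j\neq0\}$,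 and let $k^*$ be the smallest $k\ge1$ such that $\mathcal{X}_{T+1}^{(k)}\subseteq\mathcal{X}_1^{(k)}$ or $\mathcal{X}_1^{(k)}=\emptyset$. Then the periodic reference output trajectory is trackable from $\mathbf{x}_0$ (i.e. there exists $\{\mathbf{u}(t)\}_{t\in\mathbb{Z}_+}\subset\mathcal{L}_M$ such that the state trajectory with $\mathbf{x}(0)=\mathbf{x}_0$ satisfies $H\mathbf{x}(t)=\mathbf{y}_r(t)$ for all $t\ge1$) if and only if: (i) $\mathcal{X}_1^{(k^* )}\neq\emptyset$ and $\mathcal{X}_{T+1}^{(k^* )}\subseteq\mathcal{X}_1^{(k^* )}$; and (ii) there exists $\mathbf{u}\in\mathcal{L}_M$ such that $L\ltimes\mathbf{u}\ltimes\mathbf{x}_0\in\mathcal{X}_1^{(k^* )}$.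
   Context: $\delta_k^i$ is the $i$-th canonical vector of $\mathbb{R}^k$; $\mathcal{L}_k$ is the set of canonical vectors of $\mathbb{R}^k$; $\mathcal{L}_{k\times q}$ the set of $k\times q$ matrices whose columns lie in $\mathcal{L}_k$. $N=2^n$, $M=2^m$, $P=2^p$. $L=[L_1|\cdots|L_M]$ with $L_i\in\mathcal{L}_{N\times N}$, and $L\ltimes\delta_M^i\ltimes\mathbf{x}=L_i\mathbf{x}$. $\vee$ is entrywise Boolean OR, $\odot$ is the entrywise (Hadamard) product, matrix–vector products are ordinary (only the zero/nonzero pattern of the vectors matters), and $[\mathbf{w}]_j$ is the $j$-th entry of $\mathbf{w}$. *)

theory Defs
  imports Main
begin

(* Encoding conventions:
   - the canonical vector delta_k^j (j = 1..k) is encoded by the index j-1 in {0..<k};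
   - a logical matrix in L_{N x N M} is encoded by L :: nat => nat => nat with
     L_u delta_N^x = delta_N^(L u x) (input index u < M, state index x < N);
   - H in L_{P x N} is encoded by H :: nat => nat, H delta_N^x = delta_P^(H x);
   - vectors in R^N are represented by their zero/nonzero pattern (nat => bool on {0..<N}),
     matrices by their zero/nonzero pattern (nat => nat => bool, row then column). *)

type_synonym bvec = "nat \<Rightarrow> bool"
type_synonym bmat = "nat \<Rightarrow> nat \<Rightarrow> bool"

(* nonzero pattern of the ordinary product A w, A with N columns, nonnegative entries *)
definition bmv :: "bmat \<Rightarrow> nat \<Rightarrow> bvec \<Rightarrow> bvec" where
  "bmv A N w = (\<lambda>a. \<exists>b<N. A a b \<and> w b)"

definition btr :: "bmat \<Rightarrow> bmat" where
  "btr A = (\<lambda>a b. A b a)"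

definition had :: "bvec \<Rightarrow> bvec \<Rightarrow> bvec" where
  "had w1 w2 = (\<lambda>j. w1 j \<and> w2 j)"

definition Lblock :: "(nat \<Rightarrow> nat \<Rightarrow> nat) \<Rightarrow> nat \<Rightarrow> bmat" where
  "Lblock L u = (\<lambda>a b. L u b = a)"

definition Ltot :: "nat \<Rightarrow> (nat \<Rightarrow> nat \<Rightarrow> nat) \<Rightarrow> bmat" where
  "Ltot M L = (\<lambda>a b. \<exists>u<M. Lblock L u a b)"

definition yref :: "nat \<Rightarrow> (nat \<Rightarrow> nat) \<Rightarrow> nat \<Rightarrow> nat" where
  "yref T i t = i ((t - 1) mod T + 1)"

(* v(t) = H^T y_r(t) *)
definition vvec :: "nat \<Rightarrow> (nat \<Rightarrow> nat) \<Rightarrow> (nat \<Rightarrow> nat) \<Rightarrow> nat \<Rightarrow> bvec" where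
  "vvec N H yr t = (\<lambda>j. j < N \<and> H j = yr t)"

(* alpha(1) = v(1), alpha(t) = v(t) \<odot> (L_tot alpha(t-1)); index 0 unused *)
primrec alpha :: "nat \<Rightarrow> bmat \<Rightarrow> (nat \<Rightarrow> bvec) \<Rightarrow> nat \<Rightarrow> bvec" where
  "alpha N Lt v 0 = (\<lambda>_. False)"
| "alpha N Lt v (Suc t) =
     (if t = 0 then v 1 else had (v (Suc t)) (bmv Lt N (alpha N Lt v t)))"

(* backward recursion: value at t = T+1-d *)
primrec bwd :: "nat \<Rightarrow> bmat \<Rightarrow> nat \<Rightarrow> (nat \<Rightarrow> bvec) \<Rightarrow> bvec \<Rightarrow> nat \<Rightarrow> bvec" where
  "bwd N Lt T g bnd 0 = bnd"
| "bwd N Lt T g bnd (Suc d) = had (g (T - d)) (bmv (btr Lt) N (bwd N Lt T g bnd d))"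

definition bw :: "nat \<Rightarrow> bmat \<Rightarrow> nat \<Rightarrow> (nat \<Rightarrow> bvec) \<Rightarrow> bvec \<Rightarrow> nat \<Rightarrow> bvec" where
  "bw N Lt T g bnd t = bwd N Lt T g bnd (Suc T - t)"

(* betaS k = beta_{k+1} *)
primrec betaS :: "nat \<Rightarrow> bmat \<Rightarrow> nat \<Rightarrow> (nat \<Rightarrow> bvec) \<Rightarrow> nat \<Rightarrow> nat \<Rightarrow> bvec" where
  "betaS N Lt T v 0 =
     bw N Lt T (alpha N Lt v) (alpha N Lt v (T + 1))"
| "betaS N Lt T v (Suc k) =
     bw N Lt T (betaS N Lt T v k)
        (had (betaS N Lt T v k (T + 1)) (betaS N Lt T v k 1))"

definition beta :: "nat \<Rightarrow> bmat \<Rightarrow> nat \<Rightarrow> (nat \<Rightarrow> bvec) \<Rightarrow> nat \<Rightarrow> nat \<Rightarrow> bvec" where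
  "beta N Lt T v k = betaS N Lt T v (k - 1)"

definition Xset :: "nat \<Rightarrow> bmat \<Rightarrow> nat \<Rightarrow> (nat \<Rightarrow> bvec) \<Rightarrow> nat \<Rightarrow> nat \<Rightarrow> nat set" where
  "Xset N Lt T v k t = {j. j < N \<and> beta N Lt T v k t j}"

definition kstar :: "nat \<Rightarrow> bmat \<Rightarrow> nat \<Rightarrow> (nat \<Rightarrow> bvec) \<Rightarrow> nat" where
  "kstar N Lt T v = (LEAST k. 1 \<le> k \<and>
      (Xset N Lt T v k (T + 1) \<subseteq> Xset N Lt T v k 1 \<or> Xset N Lt T v k 1 = {}))"

primrec traj :: "(nat \<Rightarrow> nat \<Rightarrow> nat) \<Rightarrow> nat \<Rightarrow> (nat \<Rightarrow> nat) \<Rightarrow> nat \<Rightarrow> nat" where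
  "traj L x0 u 0 = x0"
| "traj L x0 u (Suc t) = L (u t) (traj L x0 u t)"

definition trackable :: "nat \<Rightarrow> (nat \<Rightarrow> nat \<Rightarrow> nat) \<Rightarrow> (nat \<Rightarrow> nat) \<Rightarrow> (nat \<Rightarrow> nat) \<Rightarrow> nat \<Rightarrow> bool" where
  "trackable M L H yr x0 = (\<exists>u. (\<forall>t. u t < M) \<and> (\<forall>t\<ge>1. H (traj L x0 u t) = yr t))"

end

theory Submission
  imports Defs
begin

lemma bw_top: "bw N Lt T g bnd (Suc T) = bnd"
  by (simp add: bw_def)

lemma bw_step: "t \<le> T \<Longrightarrow>
  bw N Lt T g bnd t = had (g t) (bmv (btr Lt) N (bw N Lt T g bnd (Suc t)))"
proof -
  assume "t \<le> T"
  then have "Suc T - t = Suc (T - t)" "T - (T - t) = t" "Suc T - Suc t = T - t" by auto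
  then show ?thesis by (simp add: bw_def)
qed

lemma betaS_top: "betaS N Lt T v (Suc k) (Suc T) =
   had (betaS N Lt T v k (Suc T)) (betaS N Lt T v k 1)"
  by (simp add: bw_top)

lemma alpha_v: "alpha N Lt v s x \<Longrightarrow> 1 \<le> s \<Longrightarrow> v s x"
  by (cases s) (auto simp: had_def split: if_splits)

lemma betaS_alpha: "1 \<le> s \<Longrightarrow> s \<le> Suc T \<Longrightarrow> betaS N Lt T v k s x \<Longrightarrow> alpha N Lt v s x"
proof (induction k arbitrary: s x)
  case 0
  then show ?case
  proof (cases "s = Suc T")
    case True then show ?thesis using 0 by (simp add: bw_top)
  next
    case False then have "s \<le> T" using 0 by auto
    then show ?thesis using 0 by (simp add: bw_step had_def)
  qed
next
  case (Suc k)
  then show ?case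
  proof (cases "s = Suc T")
    case True then show ?thesis using Suc.IH[of "Suc T" x] Suc.prems
      by (auto simp: bw_top had_def simp del: alpha.simps)
  next
    case False then have "s \<le> T" using Suc by auto
    then show ?thesis using Suc by (simp add: bw_step had_def)
  qed
qed

lemma bw_path:
  assumes "\<forall>t. Lt (y (Suc t)) (y t)" "\<forall>t. y t < N"
    "\<forall>s. 1 \<le> s \<longrightarrow> s \<le> T \<longrightarrow> g s (y s)" "bnd (y (Suc T))"
    "1 \<le> s" "s \<le> Suc T"
  shows "bw N Lt T g bnd s (y s)"
  using assms(6,5)
proof (induction s rule: inc_induct)
  case base then show ?case using assms by (simp add: bw_top)
next
  case (step n)
  then have "n \<le> T" by auto
  then show ?case using step assms unfolding bw_step[OF \<open>n \<le> T\<close>]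
    by (auto simp: had_def bmv_def btr_def)
qed

lemma alpha_path:
  assumes "\<forall>t. Lt (y (Suc t)) (y t)" "\<forall>t. y t < N" "\<forall>s. 1 \<le> s \<longrightarrow> v s (y s)"
  shows "1 \<le> s \<Longrightarrow> alpha N Lt v s (y s)"
proof (induction s)
  case 0 then show ?case by simp
next
  case (Suc s)
  show ?case
  proof (cases "s = 0")
    case True then show ?thesis using assms by simp
  next
    case False
    then show ?thesis using Suc assms by (auto simp: had_def bmv_def)
  qed
qed

lemma betaS_traj:
  assumes "\<forall>t. Lt (xs (Suc t)) (xs t)" "\<forall>t. xs t < N"
    "\<forall>q s. 1 \<le> s \<longrightarrow> v s (xs (q*T+s))"
  shows "\<forall>q s. 1 \<le> s \<longrightarrow> s \<le> Suc T \<longrightarrow> betaS N Lt T v k s (xs (q*T+s))"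
proof (induction k)
  case 0
  show ?case
  proof (intro allI impI)
    fix q s assume s: "1 \<le> s" "s \<le> Suc T"
    define y where "y = (\<lambda>t. xs (q*T+t))"
    have y1: "\<forall>t. Lt (y (Suc t)) (y t)" using assms(1) unfolding y_def by (metis add_Suc_right)
    have y2: "\<forall>t. y t < N" using assms(2) unfolding y_def by simp
    have y3: "\<forall>s. 1 \<le> s \<longrightarrow> v s (y s)" using assms(3) unfolding y_def by simp
    have "bw N Lt T (alpha N Lt v) (alpha N Lt v (T+1)) s (y s)"
      apply (rule bw_path[OF y1 y2])
      using alpha_path[of Lt y N v, OF y1 y2 y3] s by (auto simp del: alpha.simps)
    then show "betaS N Lt T v 0 s (xs (q*T+s))" by (simp add: y_def)
  qed
next
  case (Suc k)
  show ?case
  proof (intro allI impI)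
    fix q s assume s: "1 \<le> s" "s \<le> Suc T"
    let ?y = "\<lambda>t. xs (q*T+t)"
    have y1: "\<forall>t. Lt (?y (Suc t)) (?y t)" using assms(1) by (metis add_Suc_right)
    have y2: "\<forall>t. ?y t < N" using assms(2) by simp
    have e: "Suc q * T + 1 = q*T + Suc T" by simp
    have b1: "betaS N Lt T v k 1 (?y (Suc T))" using Suc[rule_format, of 1 "Suc q"] e by (simp add: add.commute)
    have b0: "betaS N Lt T v k (Suc T) (?y (Suc T))" using Suc[rule_format, of "Suc T" q] by simp
    have "bw N Lt T (betaS N Lt T v k) (had (betaS N Lt T v k (T + 1)) (betaS N Lt T v k 1)) s (?y s)"
      apply (rule bw_path[OF y1 y2])
      using Suc s b0 b1 by (auto simp: had_def simp del: betaS.simps)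
    then show "betaS N Lt T v (Suc k) s (xs (q*T+s))" by simp
  qed
qed

lemma kstar_ex:
  "\<exists>k. 1 \<le> k \<and> (Xset N Lt T v k (T + 1) \<subseteq> Xset N Lt T v k 1 \<or> Xset N Lt T v k 1 = {})"
proof (rule ccontr)
  assume a: "\<not> ?thesis"
  let ?Z = "\<lambda>k. Xset N Lt T v k (T + 1)"
  have fin: "finite (?Z k)" for k unfolding Xset_def by simp
  have rec: "?Z (Suc (Suc k)) = ?Z (Suc k) \<inter> Xset N Lt T v (Suc k) 1" for k
    by (auto simp: Xset_def beta_def had_def bw_top)
  have lt: "card (?Z (Suc (Suc k))) < card (?Z (Suc k))" for k
  proof -
    have "\<not> ?Z (Suc k) \<subseteq> Xset N Lt T v (Suc k) 1" using a by force
    then have "?Z (Suc (Suc k)) \<subset> ?Z (Suc k)" using rec by blast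
    then show ?thesis using fin psubset_card_mono by blast
  qed
  have "card (?Z (Suc k)) + k \<le> card (?Z 1)" for k
  proof (induction k)
    case 0 then show ?case by simp
  next
    case (Suc k) then show ?case using lt[of k] by simp
  qed
  moreover have "card (?Z 1) \<le> N"
    by (rule order.trans[OF card_mono[of "{..<N}"]]) (auto simp: Xset_def)
  ultimately show False by (metis add_leD2 not_less_eq_eq order.trans)
qed

theorem theorem2:
  fixes n m p N M P T :: nat
    and L :: "nat \<Rightarrow> nat \<Rightarrow> nat" and H :: "nat \<Rightarrow> nat"
    and i :: "nat \<Rightarrow> nat" and x0 :: nat
  assumes "N = 2 ^ n" and "M = 2 ^ m" and "P = 2 ^ p"
    and L_log: "\<forall>u<M. \<forall>x<N. L u x < N"
    and H_log: "\<forall>x<N. H x < P"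
    and "T \<ge> 1"
    and i_range: "\<forall>s\<in>{1..T}. i s < P"
    and minimal: "\<forall>T'. 1 \<le> T' \<and> T' < T \<longrightarrow> \<not> (\<forall>t\<ge>1. yref T i (t + T') = yref T i t)"
    and "x0 < N"
  shows "trackable M L H (yref T i) x0 \<longleftrightarrow>
    (let Lt = Ltot M L; v = vvec N H (yref T i); k = kstar N Lt T v in
       (Xset N Lt T v k 1 \<noteq> {} \<and> Xset N Lt T v k (T + 1) \<subseteq> Xset N Lt T v k 1) \<and>
       (\<exists>u<M. L u x0 \<in> Xset N Lt T v k 1))"
proof -
  define Lt where "Lt = Ltot M L"
  define v where "v = vvec N H (yref T i)"
  define k where "k = kstar N Lt T v"
  have yper: "yref T i (q*T + t) = yref T i t" if "1 \<le> t" for q t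
  proof -
    have "q*T + t - 1 = (t - 1) + q*T" using that by simp
    then show ?thesis unfolding yref_def by simp
  qed
  have vper: "v s x \<longleftrightarrow> x < N \<and> H x = yref T i s" for s x
    by (simp add: v_def vvec_def)
  have yph: "yref T i ((t - 1) mod T + 1) = yref T i t" for t
    unfolding yref_def using \<open>T \<ge> 1\<close> by simp
  have "trackable M L H (yref T i) x0 \<longleftrightarrow>
    (Xset N Lt T v k 1 \<noteq> {} \<and> Xset N Lt T v k (T + 1) \<subseteq> Xset N Lt T v k 1) \<and>
       (\<exists>u<M. L u x0 \<in> Xset N Lt T v k 1)"
  proof
    assume "trackable M L H (yref T i) x0"
    then obtain u where u: "\<forall>t. u t < M" "\<forall>t\<ge>1. H (traj L x0 u t) = yref T i t"
      unfolding trackable_def by blast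
    define xs where "xs = traj L x0 u"
    have xsN: "\<forall>t. xs t < N"
    proof
      fix t show "xs t < N" unfolding xs_def
        by (induction t) (auto simp: \<open>x0 < N\<close> L_log u(1))
    qed
    have step: "\<forall>t. Lt (xs (Suc t)) (xs t)"
      using u(1) by (auto simp: Lt_def xs_def Ltot_def Lblock_def)
    have vv: "\<forall>q s. 1 \<le> s \<longrightarrow> v s (xs (q*T+s))"
      using u(2) xsN yper by (auto simp: vper xs_def)
    have B: "betaS N Lt T v kk s (xs (q*T+s))" if "1 \<le> s" "s \<le> Suc T" for kk q s
      using betaS_traj[OF step xsN vv] that by blast
    have x1: "xs 1 \<in> Xset N Lt T v k 1"
      using B[of 1 _ 0] xsN by (simp add: Xset_def beta_def)
    have ne: "Xset N Lt T v k 1 \<noteq> {}" using x1 by blast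
    have "1 \<le> k \<and> (Xset N Lt T v k (T + 1) \<subseteq> Xset N Lt T v k 1 \<or> Xset N Lt T v k 1 = {})"
      unfolding k_def kstar_def by (rule LeastI_ex[OF kstar_ex])
    then have "Xset N Lt T v k (T + 1) \<subseteq> Xset N Lt T v k 1" using ne by blast
    moreover have "\<exists>u<M. L u x0 \<in> Xset N Lt T v k 1"
      using x1 u(1) by (auto simp: xs_def)
    ultimately show "(Xset N Lt T v k 1 \<noteq> {} \<and> Xset N Lt T v k (T + 1) \<subseteq> Xset N Lt T v k 1) \<and>
       (\<exists>u<M. L u x0 \<in> Xset N Lt T v k 1)" using ne by blast
  next
    assume a: "(Xset N Lt T v k 1 \<noteq> {} \<and> Xset N Lt T v k (T + 1) \<subseteq> Xset N Lt T v k 1) \<and>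
       (\<exists>u<M. L u x0 \<in> Xset N Lt T v k 1)"
    define B where "B = betaS N Lt T v (k - 1)"
    have Bk: "beta N Lt T v k = B" by (simp add: B_def beta_def)
    have ZX: "B (Suc T) y \<Longrightarrow> y < N \<Longrightarrow> B 1 y" for y
      using a by (auto simp: Xset_def Bk)
    obtain u0 where u0: "u0 < M" "L u0 x0 < N" "B 1 (L u0 x0)"
      using a by (auto simp: Xset_def Bk)
    have Bstep: "\<exists>u<M. L u x < N \<and> B (Suc s) (L u x)" if "s \<le> T" "B s x" for s x
    proof -
      obtain g bnd where gb: "B = bw N Lt T g bnd"
        unfolding B_def by (cases "k - 1") auto
      show ?thesis using that L_log unfolding gb bw_step[OF \<open>s \<le> T\<close>]
        by (auto simp: had_def bmv_def btr_def Lt_def Ltot_def Lblock_def)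
    qed
    have BH: "H x = yref T i s" if "1 \<le> s" "s \<le> Suc T" "B s x" for s x
      using alpha_v[OF betaS_alpha[OF that[unfolded B_def]] that(1)] by (simp add: vper)
    define ph where "ph t = (t - 1) mod T + 1" for t
    have ph1: "1 \<le> ph t" "ph t \<le> T" for t using \<open>T \<ge> 1\<close> by (auto simp: ph_def)
      (metis Suc_eq_plus1 Suc_leI \<open>T \<ge> 1\<close> le_less_trans mod_less_divisor not_less zero_less_one)
    define G where "G t x = (if t = 0 then x = x0 else x < N \<and> B (ph t) x)" for t x
    have Gs: "\<exists>u<M. G (Suc t) (L u x)" if "G t x" for t x
    proof (cases "t = 0")
      case True then show ?thesis using that u0 by (auto simp: G_def ph_def)
    next
      case False
      then have xg: "x < N" "B (ph t) x" using that by (auto simp: G_def)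
      obtain u where uu: "u < M" "L u x < N" "B (Suc (ph t)) (L u x)"
        using Bstep[OF ph1(2) xg(2)] by blast
      have phs: "ph (Suc t) = (if ph t = T then 1 else Suc (ph t))"
      proof -
        obtain t' where t': "t = Suc t'" using False by (cases t) auto
        show ?thesis unfolding ph_def t' by (simp add: mod_Suc)
      qed
      show ?thesis
      proof (cases "ph t = T")
        case True then show ?thesis using uu ZX by (auto simp: G_def phs)
      next
        case f: False then show ?thesis using uu by (auto simp: G_def phs)
      qed
    qed
    define c where "c t x = (SOME u. u < M \<and> G (Suc t) (L u x))" for t x
    have c: "c t x < M \<and> G (Suc t) (L (c t x) x)" if "G t x" for t x
      unfolding c_def using someI_ex[OF Gs[OF that]] .
    define xs where "xs = rec_nat x0 (\<lambda>t x. L (c t x) x)"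
    have xs0: "xs 0 = x0" and xsS: "xs (Suc t) = L (c t (xs t)) (xs t)" for t
      by (simp_all add: xs_def)
    have Gx: "G t (xs t)" for t
    proof (induction t)
      case 0 then show ?case by (simp add: xs0 G_def)
    next
      case (Suc t) then show ?case using c[OF Suc.IH] by (simp add: xsS)
    qed
    define u where "u t = c t (xs t)" for t
    have tr: "traj L x0 u t = xs t" for t
      by (induction t) (auto simp: xs0 xsS u_def)
    show "trackable M L H (yref T i) x0"
      unfolding trackable_def
    proof (intro exI conjI allI impI)
      fix t show "u t < M" using c[OF Gx] by (simp add: u_def)
    next
      fix t :: nat assume "1 \<le> t"
      then have "B (ph t) (xs t)" using Gx[of t] by (simp add: G_def)
      then have "H (xs t) = yref T i (ph t)" using BH[of "ph t" "xs t"] ph1(1)[of t] ph1(2)[of t] by simp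
      then show "H (traj L x0 u t) = yref T i t" using yph by (simp add: tr ph_def)
    qed
  qed
  then show ?thesis by (simp add: Lt_def v_def k_def Let_def)
qed

end
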